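(* Let $m\ge1$ be an integer, $\beta\in\mathbb R$, and let $T>0$ and $f:[-T,T]\to\mathbb R$ be the unique pair with $f''=-f^3+\beta f$, $f(\pm T)=0$, $f'(\pm T)=\mp m$, $f>0$ on $(-T,T)$. Define $k>0$ by $k^2=\tfrac12\bigl(1+\beta/\sqrt{2m^2+\beta^2}\bigr)$ and $K(k)=\int_0^1\frac{dx}{\sqrt{1-x^2}\sqrt{1-k^2x^2}}$. Then $$T=\frac{K(k)}{\sqrt[4]{2m^2+\beta^2}},\qquad \int_{-T}^Tf\,dt=2\sqrt2\arcsin(k),\qquad \int_{-T}^Tf^3\,dt=2\beta\sqrt2\arcsin(k)+2m,$$ $$\int_{-T}^Tf^5\,dt=(2m^2+3\beta^2)\sqrt2\arcsin(k)+3m\beta .$$ *)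

theory Defs
  imports "HOL-Analysis.Analysis"
begin

definition ellK :: "real \<Rightarrow> real" where
  "ellK k = integral {0..1} (\<lambda>x. 1 / (sqrt (1 - x\<^sup>2) * sqrt (1 - k\<^sup>2 * x\<^sup>2)))"

end

theory Submission
  imports Defs
begin

lemma energy:
  fixes m :: nat and \<beta> T :: real and f f' :: "real \<Rightarrow> real"
  assumes T: "T > 0"
    and d1: "\<And>t. t \<in> {-T..T} \<Longrightarrow> (f has_real_derivative f' t) (at t within {-T..T})"
    and d2: "\<And>t. t \<in> {-T..T} \<Longrightarrow>
               (f' has_real_derivative (\<beta> * f t - (f t) ^ 3)) (at t within {-T..T})"
    and bc: "f T = 0" "f' T = - real m"
  shows "\<forall>t\<in>{-T..T}. (f' t)^2 = (real m)^2 - (f t)^4/2 + \<beta> * (f t)^2"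
proof -
  define E where "E t = (f' t)^2/2 + (f t)^4/4 - \<beta> * (f t)^2/2" for t
  have "\<exists>c. \<forall>t\<in>{-T..T}. E t = c"
  proof (rule has_field_derivative_zero_constant)
    fix t assume t: "t \<in> {-T..T}"
    have "(E has_real_derivative (f' t * (\<beta> * f t - (f t) ^ 3) + (f t)^3 * f' t - \<beta> * f t * f' t)) (at t within {-T..T})"
      unfolding E_def
      by (auto intro!: derivative_eq_intros d1[OF t] d2[OF t] simp: field_simps power2_eq_square power3_eq_cube)
    then show "(E has_real_derivative 0) (at t within {-T..T})"
      by (simp add: algebra_simps power3_eq_cube)
  qed simp
  then obtain c where c: "\<forall>t\<in>{-T..T}. E t = c" by blast
  have "E T = (real m)^2/2" unfolding E_def using bc by simp
  moreover have "T \<in> {-T..T}" using T by simp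
  ultimately have "c = (real m)^2/2" using c by auto
  then show ?thesis using c unfolding E_def by (auto simp: field_simps)
qed

lemma thetaD:
  fixes m :: nat and \<beta> T s b :: real and f f' :: "real \<Rightarrow> real"
  assumes T: "T > 0"
    and d1: "\<And>t. t \<in> {-T..T} \<Longrightarrow> (f has_real_derivative f' t) (at t within {-T..T})"
    and d2: "\<And>t. t \<in> {-T..T} \<Longrightarrow>
               (f' has_real_derivative (\<beta> * f t - (f t) ^ 3)) (at t within {-T..T})"
    and E: "\<forall>t\<in>{-T..T}. (f' t)^2 = (real m)^2 - (f t)^4/2 + \<beta> * (f t)^2"
    and s2: "s^2 = 2 * (real m)^2 + \<beta>^2" and spos: "s > 0" and b: "b = s - \<beta>" and bpos: "b > 0"
    and t: "t \<in> {-T..T}"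
  shows "((\<lambda>t. 2 * arctan (sqrt 2 * f' t / ((f t)^2 + b))) has_real_derivative (- sqrt 2 * f t)) (at t within {-T..T})"
proof -
  define q where "q = (f t)^2 + b"
  have qpos: "q > 0" unfolding q_def using bpos by (simp add: add_nonneg_pos)
  have Et: "(f' t)^2 = (real m)^2 - (f t)^4/2 + \<beta> * (f t)^2" using E t by blast
  have i1: "q^2 + 2 * (f' t)^2 = 2 * s * q"
    unfolding q_def b Et using s2 by algebra
  have i2: "(\<beta> * f t - (f t) ^ 3) * q - 2 * f t * (f' t)^2 = - s * f t * q"
    unfolding q_def b Et using s2 by algebra
  have "((\<lambda>t. 2 * arctan (sqrt 2 * f' t / ((f t)^2 + b))) has_real_derivative
     2 * (inverse (1 + (sqrt 2 * f' t / q)^2) * (((\<beta> * f t - f t ^ 3) * sqrt 2 * q - sqrt 2 * f' t * (2 * f' t * f t)) / (q*q))))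
     (at t within {-T..T})"
    unfolding q_def using qpos[unfolded q_def]
    by (auto intro!: derivative_eq_intros d1[OF t] d2[OF t] simp: algebra_simps)
  moreover have "2 * (inverse (1 + (sqrt 2 * f' t / q)^2) * (((\<beta> * f t - f t ^ 3) * sqrt 2 * q - sqrt 2 * f' t * (2 * f' t * f t)) / (q*q)))
     = - sqrt 2 * f t"
  proof -
    have e1: "1 + (sqrt 2 * f' t / q)^2 = 2 * s / q"
      using i1 qpos by (simp add: field_simps power_mult_distrib power2_eq_square)
    have e2: "(\<beta> * f t - f t ^ 3) * sqrt 2 * q - sqrt 2 * f' t * (2 * f' t * f t) = sqrt 2 * (- s * f t * q)"
      using i2 by algebra
    show ?thesis unfolding e1 e2 using qpos spos by (simp add: field_simps)
  qed
  ultimately show ?thesis by (rule DERIV_cong)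
qed

lemma phiD:
  fixes m :: nat and \<beta> T s a b :: real and f f' :: "real \<Rightarrow> real"
  assumes T: "T > 0"
    and d1: "\<And>t. t \<in> {-T..T} \<Longrightarrow> (f has_real_derivative f' t) (at t within {-T..T})"
    and d2: "\<And>t. t \<in> {-T..T} \<Longrightarrow>
               (f' has_real_derivative (\<beta> * f t - (f t) ^ 3)) (at t within {-T..T})"
    and E: "\<forall>t\<in>{-T..T}. (f' t)^2 = (real m)^2 - (f t)^4/2 + \<beta> * (f t)^2"
    and s2: "s^2 = 2 * (real m)^2 + \<beta>^2" and spos: "s > 0" and b: "b = s - \<beta>" and bpos: "b > 0"
    and a: "a = s + \<beta>" and apos: "a > 0"
    and t: "t \<in> {-T..T}" and ft: "f t > 0"
  shows "((\<lambda>t. arcsin (- (sqrt 2 * f' t) / (sqrt a * sqrt ((f t)^2 + b)))) has_real_derivative sqrt (((f t)^2 + b) / 2)) (at t within {-T..T})"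
proof -
  define q where "q = (f t)^2 + b"
  have qpos: "q > 0" unfolding q_def using bpos by (simp add: add_nonneg_pos)
  define r where "r = sqrt q"
  have rpos: "r > 0" and rr: "r * r = q" unfolding r_def using qpos by auto
  have Et: "(f' t)^2 = (real m)^2 - (f t)^4/2 + \<beta> * (f t)^2" using E t by blast
  have i3: "(\<beta> * f t - (f t) ^ 3) * q - f t * (f' t)^2 = - f t * q^2 / 2"
    unfolding q_def b Et using s2 by algebra
  have i4: "2 * (f' t)^2 = (a - (f t)^2) * q"
    unfolding q_def b a Et using s2 by algebra
  have saa: "sqrt a * sqrt a = a" using apos by simp
  define A where "A = - (sqrt 2 * f' t) / (sqrt a * r)"
  have A2: "1 - A^2 = (f t)^2 / a"
  proof -
    have r2: "r^2 = q" using rr by (simp add: power2_eq_square)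
    have "A^2 = 2 * (f' t)^2 / (a * r^2)"
      unfolding A_def using apos by (simp add: power_divide power_mult_distrib)
    then have "A^2 = 2 * (f' t)^2 / (a * q)" using r2 by simp
    also have "\<dots> = (a - (f t)^2) / a" unfolding i4 using qpos apos by (simp add: field_simps)
    finally show ?thesis using apos by (simp add: field_simps)
  qed
  have Abnd: "-1 < A \<and> A < 1"
  proof -
    have "A^2 < 1" using A2 apos ft by (smt (verit) divide_pos_pos zero_less_power)
    then show ?thesis unfolding abs_square_less_1 by linarith
  qed
  have sq: "sqrt (1 - A^2) = f t / sqrt a"
    unfolding A2 using ft apos by (simp add: real_sqrt_divide)
  have dA: "((\<lambda>t. - (sqrt 2 * f' t) / (sqrt a * sqrt ((f t)^2 + b))) has_real_derivative
     sqrt 2 / sqrt a * f t * r / 2) (at t within {-T..T})"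
    apply (rule DERIV_cong)
    apply (auto intro!: derivative_eq_intros d1[OF t] d2[OF t] simp: q_def[symmetric] r_def[symmetric] qpos rpos)
    using qpos apos rpos apply auto[4]
    using rpos apos i3[unfolded rr[symmetric]] apply (simp add: field_simps)
    using saa 
    by algebra
  have dd: "DERIV arcsin A :> inverse (sqrt (1 - A\<^sup>2))" using Abnd by (intro DERIV_arcsin) auto
  have "A = - (sqrt 2 * f' t) / (sqrt a * sqrt ((f t)^2 + b))" unfolding A_def r_def q_def ..
  note ch = DERIV_chain2[OF dd[unfolded this] dA]
  have "inverse (sqrt (1 - A\<^sup>2)) * (sqrt 2 / sqrt a * f t * r / 2) = sqrt (((f t)^2 + b) / 2)"
  proof -
    have "sqrt (((f t)^2 + b) / 2) = r / sqrt 2" unfolding r_def q_def by (simp add: real_sqrt_divide)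
    also have "\<dots> = sqrt 2 * r / 2" by (simp add: field_simps)
    finally show ?thesis unfolding sq using ft apos by (simp add: field_simps)
  qed
  then show ?thesis using ch unfolding A_def r_def q_def by simp
qed

theorem lemma4p2:
  fixes m :: nat and \<beta> T k :: real and f f' :: "real \<Rightarrow> real"
  assumes m: "m \<ge> 1"
    and T: "T > 0"
    and d1: "\<And>t. t \<in> {-T..T} \<Longrightarrow> (f has_real_derivative f' t) (at t within {-T..T})"
    and d2: "\<And>t. t \<in> {-T..T} \<Longrightarrow>
               (f' has_real_derivative (\<beta> * f t - (f t) ^ 3)) (at t within {-T..T})"
    and bc: "f (-T) = 0" "f T = 0" "f' (-T) = real m" "f' T = - real m"
    and pos: "\<And>t. t \<in> {-T<..<T} \<Longrightarrow> f t > 0"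
    and kpos: "k > 0"
    and kdef: "k\<^sup>2 = (1 + \<beta> / sqrt (2 * (real m)\<^sup>2 + \<beta>\<^sup>2)) / 2"
  shows "T = ellK k / root 4 (2 * (real m)\<^sup>2 + \<beta>\<^sup>2)
    \<and> integral {-T..T} f = 2 * sqrt 2 * arcsin k
    \<and> integral {-T..T} (\<lambda>t. (f t) ^ 3) = 2 * \<beta> * sqrt 2 * arcsin k + 2 * real m
    \<and> integral {-T..T} (\<lambda>t. (f t) ^ 5)
           = (2 * (real m)\<^sup>2 + 3 * \<beta>\<^sup>2) * sqrt 2 * arcsin k + 3 * real m * \<beta>"
proof -
  define s where "s = sqrt (2 * (real m)\<^sup>2 + \<beta>\<^sup>2)"
  define a where "a = s + \<beta>"
  define b where "b = s - \<beta>"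
  have s2: "s^2 = 2 * (real m)^2 + \<beta>^2" unfolding s_def by simp
  have mpos: "real m > 0" using m by simp
  have sabs: "s > \<bar>\<beta>\<bar>"
  proof -
    have "sqrt (\<beta>^2) < s" unfolding s_def using mpos by (intro real_sqrt_less_mono) simp
    then show ?thesis by simp
  qed
  then have spos: "s > 0" and apos: "a > 0" and bpos: "b > 0" unfolding a_def b_def by auto
  have ab: "a * b = 2 * (real m)^2" unfolding a_def b_def using s2 by algebra
  have k2: "k^2 = a / (2 * s)" using kdef spos unfolding s_def[symmetric] a_def by (simp add: field_simps)
  have klt: "k^2 < 1" unfolding k2 a_def using sabs spos by (simp add: field_simps)
  have Tin: "T \<in> {-T..T}" "-T \<in> {-T..T}" using T by auto
  have E: "\<forall>t\<in>{-T..T}. (f' t)^2 = (real m)^2 - (f t)^4/2 + \<beta> * (f t)^2"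
    using energy[OF T d1 d2 bc(2) bc(4)] .
  have fnn: "f t \<ge> 0" if "t \<in> {-T..T}" for t
  proof (cases "t = -T \<or> t = T")
    case True then show ?thesis using bc by auto
  next
    case False then have "t \<in> {-T<..<T}" using that by auto
    then show ?thesis using pos by force
  qed
  have cf: "continuous_on {-T..T} f" using d1 by (rule DERIV_continuous_on)
  have cf': "continuous_on {-T..T} f'" using d2 by (rule DERIV_continuous_on)

  define x where "x = sqrt 2 * real m / b"
  define Th where "Th t = 2 * arctan (sqrt 2 * f' t / ((f t)^2 + b))" for t
  have "((\<lambda>t. - sqrt 2 * f t) has_integral (Th T - Th (-T))) {-T..T}"
  proof (rule fundamental_theorem_of_calculus)
    show "-T \<le> T" using T by simp
    fix t assume t: "t \<in> {-T..T}"
    show "(Th has_vector_derivative - sqrt 2 * f t) (at t within {-T..T})"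
      unfolding Th_def has_real_derivative_iff_has_vector_derivative[symmetric]
      by (rule thetaD[OF T d1 d2 E s2 spos b_def bpos t])
  qed
  moreover have "Th T - Th (-T) = - (4 * arctan x)"
    unfolding Th_def x_def using bc by (simp add: arctan_minus)
  ultimately have hfm: "((\<lambda>t. - sqrt 2 * f t) has_integral - (4 * arctan x)) {-T..T}" by simp
  have xk: "arctan x = arcsin k"
  proof -
    have xpos: "x > 0" unfolding x_def using mpos bpos by simp
    have "x / sqrt (1 + x^2) = sqrt (x^2 / (1 + x^2))"
      using xpos by (simp add: real_sqrt_divide)
    also have "x^2 / (1 + x^2) = a / (2 * s)"
    proof -
      have x2: "x^2 = 2 * (real m)^2 / b^2" unfolding x_def by (simp add: power_divide power_mult_distrib)
      have den: "b^2 + 2 * (real m)^2 = 2 * s * b" unfolding b_def using s2 by algebra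
      have "x^2 / (1 + x^2) = 2 * (real m)^2 / (b^2 + 2 * (real m)^2)"
        unfolding x2 using bpos by (simp add: field_simps)
      also have "\<dots> = (a * b) / ((2 * s) * b)" using ab den by (simp add: mult.commute)
      also have "\<dots> = a / (2 * s)" using bpos by simp
      finally show ?thesis .
    qed
    also have "sqrt (a / (2 * s)) = k" using k2 kpos by (metis real_sqrt_unique less_imp_le)
    finally have "sin (arctan x) = k" by (simp add: sin_arctan)
    then have "arcsin k = arcsin (sin (arctan x))" by simp
    also have "\<dots> = arctan x" using arctan_bounded[of x] by (intro arcsin_sin) auto
    finally show ?thesis by simp
  qed
  have hf: "(f has_integral 2 * sqrt 2 * arcsin k) {-T..T}"
  proof -
    have "((\<lambda>t. (- 1 / sqrt 2) * (- sqrt 2 * f t)) has_integral (- 1 / sqrt 2) * (- (4 * arctan x))) {-T..T}"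
      by (rule has_integral_mult_right[OF hfm])
    moreover have "(- 1 / sqrt 2) * (- (4 * arctan x)) = 2 * sqrt 2 * arcsin k"
      unfolding xk by (simp add: field_simps)
    ultimately show ?thesis by simp
  qed

  have h3a: "((\<lambda>t. \<beta> * f t - (f t)^3) has_integral (f' T - f' (-T))) {-T..T}"
    using T d2 by (intro fundamental_theorem_of_calculus)
      (auto simp: has_real_derivative_iff_has_vector_derivative[symmetric])
  have h3: "((\<lambda>t. (f t)^3) has_integral 2 * \<beta> * sqrt 2 * arcsin k + 2 * real m) {-T..T}"
  proof -
    have "((\<lambda>t. \<beta> * f t - (\<beta> * f t - (f t)^3)) has_integral (\<beta> * (2 * sqrt 2 * arcsin k) - (f' T - f' (-T)))) {-T..T}"
      by (rule has_integral_diff[OF has_integral_mult_right[OF hf] h3a])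
    then show ?thesis using bc by (simp add: algebra_simps)
  qed

  define D where "D t = 2 * (real m)^2 * f t + 3 * \<beta> * (f t)^3 - 2 * (f t)^5" for t
  have h5a: "(D has_integral ((f T)^2 * f' T - (f (-T))^2 * f' (-T))) {-T..T}"
  proof (rule fundamental_theorem_of_calculus)
    show "-T \<le> T" using T by simp
    fix t assume t: "t \<in> {-T..T}"
    have Et: "(f' t)^2 = (real m)^2 - (f t)^4/2 + \<beta> * (f t)^2" using E t by blast
    have "((\<lambda>t. (f t)^2 * f' t) has_real_derivative D t) (at t within {-T..T})"
      apply (rule DERIV_cong)
       apply (auto intro!: derivative_eq_intros d1[OF t] d2[OF t])
      unfolding D_def using Et by algebra
    then show "((\<lambda>t. (f t)^2 * f' t) has_vector_derivative D t) (at t within {-T..T})"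
      by (simp add: has_real_derivative_iff_has_vector_derivative)
  qed
  have h5: "((\<lambda>t. (f t)^5) has_integral (2 * (real m)\<^sup>2 + 3 * \<beta>\<^sup>2) * sqrt 2 * arcsin k + 3 * real m * \<beta>) {-T..T}"
  proof -
    have "((\<lambda>t. (1/2) * ((2 * (real m)^2 * f t + 3 * \<beta> * (f t)^3) - D t)) has_integral
       (1/2) * ((2 * (real m)^2 * (2 * sqrt 2 * arcsin k) + 3 * \<beta> * (2 * \<beta> * sqrt 2 * arcsin k + 2 * real m)) - 0)) {-T..T}"
      using h5a bc
      by (intro has_integral_mult_right has_integral_diff has_integral_add hf h3) auto
    moreover have "(\<lambda>t. (1/2) * ((2 * (real m)^2 * f t + 3 * \<beta> * (f t)^3) - D t)) = (\<lambda>t. (f t)^5)"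
      unfolding D_def by (auto simp: field_simps)
    ultimately show ?thesis by (simp add: algebra_simps power2_eq_square)
  qed

  define A where "A t = - (sqrt 2 * f' t) / (sqrt a * sqrt ((f t)^2 + b))" for t
  define ph where "ph t = arcsin (A t)" for t
  define gd where "gd t = sqrt (((f t)^2 + b) / 2)" for t
  define h where "h y = 1 / sqrt (1 - k^2 * (sin y)^2)" for y
  have qpos: "(f t)^2 + b > 0" for t using bpos by (simp add: add_nonneg_pos)
  have hpos: "1 - k^2 * (sin y)^2 > 0" for y
  proof -
    have "(sin y)^2 \<le> 1" using abs_sin_le_one[of y] abs_square_le_1 by blast
    then have "k^2 * (sin y)^2 \<le> k^2" by (simp add: mult_left_le)
    then show ?thesis using klt by linarith
  qed
  have hcont: "continuous_on S h" for S
    unfolding h_def using hpos by (intro continuous_intros) (auto simp: less_imp_neq[symmetric])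
  have A2: "(A t)^2 = (a - (f t)^2) / a" if t: "t \<in> {-T..T}" for t
  proof -
    have Et: "(f' t)^2 = (real m)^2 - (f t)^4/2 + \<beta> * (f t)^2" using E t by blast
    have i4: "2 * (f' t)^2 = (a - (f t)^2) * ((f t)^2 + b)"
      unfolding b_def a_def Et using s2 by algebra
    have "(A t)^2 = 2 * (f' t)^2 / (a * ((f t)^2 + b))"
      unfolding A_def using apos qpos[of t] by (simp add: power_divide power_mult_distrib)
    then have "(A t)^2 = ((a - (f t)^2) * ((f t)^2 + b)) / (a * ((f t)^2 + b))" unfolding i4 .
    then show ?thesis using qpos[of t] by simp
  qed
  have Ab: "-1 \<le> A t \<and> A t \<le> 1" if t: "t \<in> {-T..T}" for t
  proof -
    have "(A t)^2 \<le> 1" unfolding A2[OF t] using apos by (simp add: field_simps)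
    then show ?thesis unfolding abs_square_le_1 by linarith
  qed
  have sab: "sqrt a * sqrt b = sqrt 2 * real m"
    using ab by (simp add: real_sqrt_mult[symmetric] real_sqrt_mult)
  have phT: "ph (-T) = - (pi/2)" "ph T = pi/2"
    unfolding ph_def A_def using bc sab mpos by auto
  have cA: "continuous_on {-T..T} A"
    unfolding A_def using apos qpos cf cf'
    by (intro continuous_intros) (auto simp: less_imp_neq[symmetric])
  have cph: "continuous_on {-T..T} ph"
    unfolding ph_def using cA Ab by (intro continuous_intros) auto
  have sub: "((\<lambda>t. gd t *\<^sub>R h (ph t)) has_integral
      (integral {ph (-T)..ph T} h - integral {ph T..ph (-T)} h)) {-T..T}"
  proof (rule has_integral_substitution_general[of "{-T, T}" _ _ _ "-(pi/2)" "pi/2"])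
    show "ph ` {-T..T} \<subseteq> {-(pi/2)..pi/2}" unfolding ph_def using Ab arcsin_bounded by auto
    fix t assume t: "t \<in> {-T..T} - {-T, T}"
    then have t1: "t \<in> {-T..T}" and ft: "f t > 0" using pos by auto
    show "(ph has_real_derivative gd t) (at t within {-T..T})"
      unfolding ph_def A_def gd_def
      by (rule phiD[OF T d1 d2 E s2 spos b_def bpos a_def apos t1 ft])
  qed (use T cph hcont in auto)
  have eqs: "gd t *\<^sub>R h (ph t) = sqrt s" if t: "t \<in> {-T..T}" for t
  proof -
    have sinph: "sin (ph t) = A t" unfolding ph_def using Ab[OF t] by simp
    have "1 - k^2 * (A t)^2 = ((f t)^2 + b) / (2 * s)"
    proof -
      have X: "k^2 * (A t)^2 = (a - (f t)^2) / (2 * s)" unfolding A2[OF t] k2 using apos by simp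
      have "2 * s - a = b" unfolding a_def b_def by simp
      then show ?thesis unfolding X using spos by (simp add: divide_simps)
    qed
    then have "h (ph t) = 1 / sqrt (((f t)^2 + b) / (2 * s))" unfolding h_def sinph by simp
    then have "gd t *\<^sub>R h (ph t) = sqrt (((f t)^2 + b) / 2) / sqrt (((f t)^2 + b) / (2 * s))"
      unfolding gd_def by simp
    also have "\<dots> = sqrt ((((f t)^2 + b) / 2) / (((f t)^2 + b) / (2 * s)))"
      by (rule real_sqrt_divide[symmetric])
    also have "(((f t)^2 + b) / 2) / (((f t)^2 + b) / (2 * s)) = s"
      using qpos[of t] spos by (simp add: field_simps)
    finally show ?thesis .
  qed
  have I1: "integral {-(pi/2)..pi/2} h = 2 * T * sqrt s"
  proof -
    have "((\<lambda>t. gd t *\<^sub>R h (ph t)) has_integral 2 * T * sqrt s) {-T..T}"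
    proof -
      have "((\<lambda>t. sqrt s) has_integral 2 * T * sqrt s) {-T..T}"
        using has_integral_const_real[of "sqrt s" "-T" T] T by simp
      then show ?thesis using has_integral_cong[of "{-T..T}" "\<lambda>t. gd t *\<^sub>R h (ph t)" "\<lambda>t. sqrt s"] eqs
        by simp
    qed
    moreover have "integral {ph T..ph (-T)} h = 0" unfolding phT by simp
    ultimately show ?thesis using sub unfolding phT by (metis diff_zero has_integral_unique)
  qed
  have I2: "integral {-(pi/2)..pi/2} h = 2 * integral {0..pi/2} h"
  proof -
    have int: "h integrable_on {-(pi/2)..pi/2}" using hcont by (rule integrable_continuous_real)
    have int0: "h integrable_on {0..pi/2}" using hcont by (rule integrable_continuous_real)
    have "((\<lambda>y. h (- y)) has_integral integral {0..pi/2} h) {-(pi/2)..-0}"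
      using int0 has_integral_reflect_real by blast
    moreover have "(\<lambda>y. h (- y)) = h" unfolding h_def by auto
    ultimately have "integral {-(pi/2)..0} h = integral {0..pi/2} h" by (simp add: integral_unique)
    moreover have "integral {-(pi/2)..0} h + integral {0..pi/2} h = integral {-(pi/2)..pi/2} h"
      by (rule Henstock_Kurzweil_Integration.integral_combine) (use int in auto)
    ultimately show ?thesis by simp
  qed
  have I3: "ellK k = integral {0..pi/2} h"
  proof -
    have sub2: "((\<lambda>y. inverse (sqrt (1 - y^2)) *\<^sub>R h (arcsin y)) has_integral
      (integral {arcsin 0..arcsin 1} h - integral {arcsin 1..arcsin 0} h)) {0..1}"
    proof (rule has_integral_substitution_general[of "{1}" _ _ _ 0 "pi/2"])
      show "arcsin ` {0..1} \<subseteq> {0..pi/2}"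
        using arcsin_bounded arcsin_le_arcsin[of 0] by (auto intro: arcsin_le_arcsin)
      show "continuous_on {0..1} arcsin"
        using continuous_on_arcsin' by (rule continuous_on_subset) auto
      fix y :: real assume y: "y \<in> {0..1} - {1}"
      show "(arcsin has_real_derivative inverse (sqrt (1 - y^2))) (at y within {0..1})"
        using y by (intro DERIV_arcsin[THEN has_field_derivative_at_within]) auto
    qed (use hcont in auto)
    have "((\<lambda>y. 1 / (sqrt (1 - y\<^sup>2) * sqrt (1 - k\<^sup>2 * y\<^sup>2))) has_integral integral {0..pi/2} h) {0..1}"
    proof -
      have "((\<lambda>y. inverse (sqrt (1 - y^2)) *\<^sub>R h (arcsin y)) has_integral integral {0..pi/2} h) {0..1}"
        using sub2 by simp
      moreover have "inverse (sqrt (1 - y^2)) *\<^sub>R h (arcsin y) = 1 / (sqrt (1 - y\<^sup>2) * sqrt (1 - k\<^sup>2 * y\<^sup>2))"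
        if "y \<in> {0..1}" for y
        using that unfolding h_def by (simp add: field_simps)
      ultimately show ?thesis using has_integral_cong by (metis (no_types, lifting))
    qed
    then show ?thesis unfolding ellK_def by (rule integral_unique)
  qed
  have Tval: "T = ellK k / root 4 (2 * (real m)\<^sup>2 + \<beta>\<^sup>2)"
  proof -
    have r4: "root 4 (2 * (real m)\<^sup>2 + \<beta>\<^sup>2) = sqrt s"
      unfolding s_def sqrt_def using real_root_mult_exp[of 2 2] by simp
    have "sqrt s > 0" using spos by simp
    then show ?thesis unfolding r4 I3 using I1 I2 by (simp add: field_simps)
  qed
  show ?thesis using Tval hf h3 h5 by (auto intro: integral_unique)
qed

end
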